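(* Let $n\ge1$, $\tau\in S_n$, $\Sigma_0=(1\,2)(3\,4)\cdots(2n-1\,\,2n)\in S_{2n}$, $\Sigma_1'=\prod_{i=1}^n(2i-1,\ 2\tau(i))$ and $\Sigma_{\rm tot}=\Sigma_0\Sigma_1'$, which preserves the set $V_n^-=\{1,3,\dots,2n-1\}$ and the set $V_n^+=\{2,4,\dots,2n\}$. Then the restriction of $\Sigma_{\rm tot}$ to $V_n^-$ has exactly $C(\tau)$ cycles, and the restriction of $\Sigma_{\rm tot}$ to $V_n^+$ also has exactly $C(\tau)$ cycles. Consequently $C(\Sigma_0\Sigma_1')=2C(\tau)$.
   Context: For a permutation $\pi$, $C(\pi)$ denotes the number of cycles of $\pi$ in its disjoint cycle decomposition, fixed points counted as cycles of length one. $S_m$ is the symmetric group on $\{1,\dots,m\}$. *)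

theory Defs
  imports "HOL-Combinatorics.Combinatorics"
begin

text \<open>Number of cycles (fixed points counted) of a permutation f of the finite set A:
  the number of distinct orbits of f through points of A.\<close>
definition num_cycles :: "('a \<Rightarrow> 'a) \<Rightarrow> 'a set \<Rightarrow> nat" where
  "num_cycles f A = card ((\<lambda>x. orbit f x) ` A)"

definition Sigma0 :: "nat \<Rightarrow> nat \<Rightarrow> nat" where
  "Sigma0 n = foldr (\<circ>) (map (\<lambda>i. Transposition.transpose (2*i - 1) (2*i)) [1..<n+1]) id"

definition Sigma1' :: "nat \<Rightarrow> (nat \<Rightarrow> nat) \<Rightarrow> nat \<Rightarrow> nat" where
  "Sigma1' n \<tau> = foldr (\<circ>) (map (\<lambda>i. Transposition.transpose (2*i - 1) (2 * \<tau> i)) [1..<n+1]) id"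

definition Vminus :: "nat \<Rightarrow> nat set" where
  "Vminus n = {2*i - 1 | i. i \<in> {1..n}}"

definition Vplus :: "nat \<Rightarrow> nat set" where
  "Vplus n = {2*i | i. i \<in> {1..n}}"

end

theory Submission
  imports Defs
begin

lemma foldr_transp:
  assumes "distinct (map f xs @ map g xs)"
  shows "(\<forall>i\<in>set xs. foldr (\<circ>) (map (\<lambda>i. Transposition.transpose (f i) (g i)) xs) id (f i) = g i
          \<and> foldr (\<circ>) (map (\<lambda>i. Transposition.transpose (f i) (g i)) xs) id (g i) = f i)
     \<and> (\<forall>x. x \<notin> f ` set xs \<union> g ` set xs \<longrightarrow> foldr (\<circ>) (map (\<lambda>i. Transposition.transpose (f i) (g i)) xs) id x = x)"
  using assms
proof (induction xs)
  case Nil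
  then show ?case by simp
next
  case (Cons a xs)
  have dt: "distinct (map f xs @ map g xs)" using Cons.prems by auto
  note IH = Cons.IH[OF dt]
  have d: "distinct (f a # g a # map f xs @ map g xs)" using Cons.prems by auto
  define F where "F = foldr (\<circ>) (map (\<lambda>i. Transposition.transpose (f i) (g i)) xs) id"
  have e: "foldr (\<circ>) (map (\<lambda>i. Transposition.transpose (f i) (g i)) (a#xs)) id
     = Transposition.transpose (f a) (g a) \<circ> F" by (simp add: F_def)
  have IH': "\<forall>i\<in>set xs. F (f i) = g i \<and> F (g i) = f i"
     "\<forall>x. x \<notin> f ` set xs \<union> g ` set xs \<longrightarrow> F x = x"
    using IH unfolding F_def by blast+
  have Fa: "F (f a) = f a" "F (g a) = g a" using IH'(2) d by auto
  show ?case unfolding e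
  proof (intro conjI ballI allI impI)
    fix i assume i: "i \<in> set (a # xs)"
    show "(Transposition.transpose (f a) (g a) \<circ> F) (f i) = g i"
    proof (cases "i = a")
      case True then show ?thesis using Fa by simp
    next
      case False
      then have "i \<in> set xs" using i by simp
      then have "g i \<in> g ` set xs" "f i \<in> f ` set xs" by fastforce+
      with \<open>i \<in> set xs\<close> have "F (f i) = g i" "g i \<noteq> f a" "g i \<noteq> g a" using IH'(1) d by fastforce+
      then show ?thesis by (simp add: transpose_def)
    qed
    show "(Transposition.transpose (f a) (g a) \<circ> F) (g i) = f i"
    proof (cases "i = a")
      case True then show ?thesis using Fa by simp
    next
      case False
      then have "i \<in> set xs" using i by simp
      then have "g i \<in> g ` set xs" "f i \<in> f ` set xs" by fastforce+
      with \<open>i \<in> set xs\<close> have "F (g i) = f i" "f i \<noteq> f a" "f i \<noteq> g a" using IH'(1) d by fastforce+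
      then show ?thesis by (simp add: transpose_def)
    qed
  next
    fix x assume "x \<notin> f ` set (a#xs) \<union> g ` set (a#xs)"
    then show "(Transposition.transpose (f a) (g a) \<circ> F) x = x"
      using IH'(2) by (auto simp: transpose_def)
  qed
qed

lemma orbit_conj:
  assumes inj: "inj_on h A" and gA: "\<forall>x\<in>A. g x \<in> A"
    and fh: "\<forall>x\<in>A. f (h x) = h (g x)" and x: "x \<in> A"
  shows "orbit f (h x) = h ` orbit g x" "orbit g x \<subseteq> A"
proof -
  have pw: "(f ^^ k) (h x) = h ((g ^^ k) x) \<and> (g ^^ k) x \<in> A" for k
    by (induction k) (use x gA fh in auto)
  show "orbit f (h x) = h ` orbit g x"
    unfolding orbit_altdef using pw by auto
  show "orbit g x \<subseteq> A"
    unfolding orbit_altdef using pw by auto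
qed

lemma num_cycles_conj:
  assumes inj: "inj_on h A" and gA: "\<forall>x\<in>A. g x \<in> A"
    and fh: "\<forall>x\<in>A. f (h x) = h (g x)"
  shows "num_cycles f (h ` A) = num_cycles g A"
proof -
  have "(\<lambda>x. orbit f x) ` h ` A = (\<lambda>x. orbit f (h x)) ` A" by auto
  also have "\<dots> = (\<lambda>x. h ` orbit g x) ` A"
    using orbit_conj(1)[OF assms] by auto
  also have "\<dots> = (image h) ` ((\<lambda>x. orbit g x) ` A)" by auto
  finally have e: "(\<lambda>x. orbit f x) ` h ` A = (image h) ` ((\<lambda>x. orbit g x) ` A)" .
  have "inj_on (image h) ((\<lambda>x. orbit g x) ` A)"
  proof (rule inj_onI)
    fix S T assume "S \<in> (\<lambda>x. orbit g x) ` A" "T \<in> (\<lambda>x. orbit g x) ` A" "h ` S = h ` T"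
    moreover have "S \<subseteq> A" "T \<subseteq> A" using calculation orbit_conj(2)[OF assms] by auto
    ultimately show "S = T" using inj_on_image_eq_iff[OF inj] by blast
  qed
  then show ?thesis unfolding num_cycles_def e by (simp add: card_image)
qed

theorem lemma2:
  fixes n :: nat and \<tau> :: "nat \<Rightarrow> nat"
  assumes "n \<ge> 1" and "\<tau> permutes {1..n}"
  defines "Stot \<equiv> Sigma0 n \<circ> Sigma1' n \<tau>"
  shows "Stot ` Vminus n = Vminus n \<and> Stot ` Vplus n = Vplus n
    \<and> num_cycles (perm_restrict Stot (Vminus n)) (Vminus n) = num_cycles \<tau> {1..n}
    \<and> num_cycles (perm_restrict Stot (Vplus n)) (Vplus n) = num_cycles \<tau> {1..n}
    \<and> num_cycles Stot {1..2*n} = 2 * num_cycles \<tau> {1..n}"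
proof -
  have setl: "set [1..<n+1] = {1..n}" by auto
  have tin: "\<tau> i \<in> {1..n}" if "i \<in> {1..n}" for i
    using permutes_in_image[OF assms(2)] that by simp
  have tinj: "inj_on \<tau> {1..n}"
    using permutes_inj_on[OF assms(2)] .
  have d0: "distinct (map (\<lambda>i. 2*i - 1) [1..<n+1] @ map (\<lambda>i. 2*i) [1..<n+1])"
  proof -
    have "inj_on (\<lambda>i::nat. 2*i - 1) {1..n}" "inj_on (\<lambda>i::nat. 2*i) {1..n}"
      by (auto simp: inj_on_def)
    moreover have "2*i - 1 \<noteq> 2 * j" if "i \<in> {1..n}" "j \<in> {1..n}" for i j :: nat
      using that by (simp only: atLeastAtMost_iff) presburger
    ultimately show ?thesis unfolding distinct_append distinct_map set_map setl
      by (simp only: distinct_upt simp_thms) blast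
  qed
  have d1: "distinct (map (\<lambda>i. 2*i - 1) [1..<n+1] @ map (\<lambda>i. 2 * \<tau> i) [1..<n+1])"
  proof -
    have i1: "inj_on (\<lambda>i::nat. 2*i - 1) {1..n}" by (auto simp: inj_on_def)
    have i2: "inj_on (\<lambda>i. 2 * \<tau> i) {1..n}"
    proof (rule inj_onI)
      fix x y assume "x \<in> {1..n}" "y \<in> {1..n}" "2 * \<tau> x = 2 * \<tau> y"
      then show "x = y" using inj_onD[OF tinj, of x y] by simp
    qed
    have neq: "2*i - 1 \<noteq> 2 * \<tau> j" if "i \<in> {1..n}" "j \<in> {1..n}" for i j
      using that by (simp only: atLeastAtMost_iff) presburger
    have dj: "(\<lambda>i::nat. 2*i - 1) ` {1..n} \<inter> (\<lambda>i. 2 * \<tau> i) ` {1..n} = {}"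
    proof (rule ccontr)
      assume "\<not> ?thesis"
      then obtain i j where "i \<in> {1..n}" "j \<in> {1..n}" "2*i - 1 = 2 * \<tau> j" by blast
      then show False using neq by blast
    qed
    show ?thesis unfolding distinct_append distinct_map set_map setl
      using i1 i2 dj by (simp only: distinct_upt simp_thms)
  qed
  note S0 = foldr_transp[OF d0, folded Sigma0_def, unfolded setl]
  note S1 = foldr_transp[OF d1, folded Sigma1'_def, unfolded setl]
  have Sm: "Stot (2*i - 1) = 2 * \<tau> i - 1" if "i \<in> {1..n}" for i
  proof -
    have "Sigma1' n \<tau> (2*i-1) = 2 * \<tau> i" using S1 that by blast
    moreover have "Sigma0 n (2 * \<tau> i) = 2 * \<tau> i - 1" using S0 tin[OF that] by blast
    ultimately show ?thesis by (simp add: Stot_def)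
  qed
  have Sp: "Stot (2 * \<tau> i) = 2 * i" if "i \<in> {1..n}" for i
  proof -
    have "Sigma1' n \<tau> (2 * \<tau> i) = 2*i-1" using S1 that by blast
    moreover have "Sigma0 n (2*i-1) = 2 * i" using S0 that by blast
    ultimately show ?thesis by (simp add: Stot_def)
  qed
  have perm: "permutation \<tau>" using assms(2) permutation_permutes by blast
  have invin: "inv \<tau> j \<in> {1..n}" "\<tau> (inv \<tau> j) = j" if "j \<in> {1..n}" for j
    using assms(2) that
    by (metis permutes_inv permutes_in_image, metis permutes_inverses(1))
  have Sp': "Stot (2*j) = 2 * inv \<tau> j" if "j \<in> {1..n}" for j
    using Sp[OF invin(1)[OF that]] invin(2)[OF that] by simp
  have Vm: "Vminus n = (\<lambda>i. 2*i - 1) ` {1..n}" unfolding Vminus_def by auto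
  have Vp: "Vplus n = (\<lambda>i. 2*i) ` {1..n}" unfolding Vplus_def by auto
  have injm: "inj_on (\<lambda>i. 2*i - 1) {1..n}" by (auto simp: inj_on_def)
  have injp: "inj_on (\<lambda>i::nat. 2*i) {1..n}" by (auto simp: inj_on_def)
  have imm: "Stot ` Vminus n = Vminus n"
  proof -
    have "Stot ` Vminus n = (\<lambda>i. 2*i - 1) ` \<tau> ` {1..n}" unfolding Vm image_image
      using Sm by (auto intro!: image_cong)
    then show ?thesis using permutes_image[OF assms(2)] Vm by simp
  qed
  have imp: "Stot ` Vplus n = Vplus n"
  proof -
    have "Stot ` Vplus n = (\<lambda>i. 2*i) ` inv \<tau> ` {1..n}" unfolding Vp image_image
      using Sp' by (auto intro!: image_cong)
    then show ?thesis using permutes_image[OF permutes_inv[OF assms(2)]] Vp by simp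
  qed
  have cm: "num_cycles (perm_restrict Stot (Vminus n)) (Vminus n) = num_cycles \<tau> {1..n}"
    unfolding Vm
    by (rule num_cycles_conj[OF injm]) (use tin Sm Vm in \<open>auto simp: perm_restrict_def\<close>)
  have cp0: "num_cycles (perm_restrict Stot (Vplus n)) (Vplus n) = num_cycles (inv \<tau>) {1..n}"
    unfolding Vp
    by (rule num_cycles_conj[OF injp]) (use invin Sp' Vp in \<open>auto simp: perm_restrict_def\<close>)
  have "num_cycles (inv \<tau>) {1..n} = num_cycles \<tau> {1..n}"
    unfolding num_cycles_def orbit_inv_eq[OF perm] ..
  with cp0 have cp: "num_cycles (perm_restrict Stot (Vplus n)) (Vplus n) = num_cycles \<tau> {1..n}"
    by simp
  have orbr: "orbit Stot x = orbit (perm_restrict Stot V) x \<and> orbit Stot x \<subseteq> V"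
    if "Stot ` V = V" "x \<in> V" for V x
  proof -
    have a: "\<forall>y\<in>V. Stot y \<in> V" using that(1) by blast
    have "orbit (perm_restrict Stot V) (id x) = id ` orbit Stot x"
      by (rule orbit_conj(1)[of id V Stot]) (use a that in \<open>auto simp: perm_restrict_def\<close>)
    moreover have "orbit Stot x \<subseteq> V"
      by (rule orbit_conj(2)[of id V Stot "perm_restrict Stot V"]) (use a that in \<open>auto simp: perm_restrict_def\<close>)
    ultimately show ?thesis by simp
  qed
  have ncr: "num_cycles Stot V = num_cycles (perm_restrict Stot V) V" if "Stot ` V = V" for V
    unfolding num_cycles_def using orbr[OF that] by (auto intro!: arg_cong[where f=card] image_cong)
  have U: "{1..2*n} = Vminus n \<union> Vplus n"
  proof
    show "{1..2*n} \<subseteq> Vminus n \<union> Vplus n"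
    proof
      fix x assume x: "x \<in> {1..2*n}"
      show "x \<in> Vminus n \<union> Vplus n"
      proof (cases "even x")
        case True
        then have "x = 2 * (x div 2)" "x div 2 \<in> {1..n}" using x by auto
        then show ?thesis unfolding Vplus_def by blast
      next
        case False
        then have "x = 2 * ((x+1) div 2) - 1" "(x+1) div 2 \<in> {1..n}" using x by (simp_all only: atLeastAtMost_iff; presburger)+
        then show ?thesis unfolding Vminus_def by blast
      qed
    qed
  qed (auto simp: Vminus_def Vplus_def)
  have disj: "Vminus n \<inter> Vplus n = {}" unfolding Vminus_def Vplus_def by auto presburger
  have fin: "finite (Vminus n)" "finite (Vplus n)" using Vm Vp by auto
  have odisj: "(\<lambda>x. orbit Stot x) ` Vminus n \<inter> (\<lambda>x. orbit Stot x) ` Vplus n = {}"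
  proof (rule ccontr)
    assume "\<not> ?thesis"
    then obtain x y where xy: "x \<in> Vminus n" "y \<in> Vplus n" "orbit Stot x = orbit Stot y" by auto
    have "orbit Stot x \<subseteq> Vminus n" "orbit Stot y \<subseteq> Vplus n"
      using orbr[OF imm xy(1)] orbr[OF imp xy(2)] by auto
    then show False using xy(3) disj orbit_nonempty[of Stot x] by auto
  qed
  have "num_cycles Stot {1..2*n} = num_cycles Stot (Vminus n) + num_cycles Stot (Vplus n)"
    unfolding num_cycles_def U image_Un using fin odisj by (simp add: card_Un_disjoint)
  also have "\<dots> = 2 * num_cycles \<tau> {1..n}" using ncr[OF imm] ncr[OF imp] cm cp by simp
  finally show ?thesis using imm imp cm cp by simp
qed

end
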